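(* Let $X$ be a finite discrete space with at least two elements, $\Gamma$ a nonempty countable set, $d$ a compatible metric on $X^\Gamma$ (product topology), $\mathcal F$ the unique compatible uniformity on $X^\Gamma$, and $f:X^\Gamma\to X^\Gamma$ a map. For $x,y\in X^\Gamma$: (I) the following are equivalent: (1) there is $s>0$ with $F_{xy}(s)=0$; (2) there is $\alpha\in\mathcal F$ with $G_{xy}(\alpha)=0$; (3) there is a finite $D\subseteq\Gamma$ with $G_{xy}(\gamma_D)=0$. (II) The following are equivalent: (4) there is $s>0$ with $F_{xy}(s)<1$; (5) there is $\alpha\in\mathcal F$ with $G_{xy}(\alpha)<1$; (6) there is a finite $D\subseteq\Gamma$ with $G_{xy}(\gamma_D)<1$. (III) The following are equivalent: (7) $F^*_{xy}(s)=1$ for all $s>0$; (8) $G^*_{xy}(\alpha)=1$ for all $\alpha\in\mathcal F$; (9) $G^*_{xy}(\gamma_D)=1$ for every finite $D\subseteq\Gamma$.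
   Context: For $D\subseteq\Gamma$, $\gamma_D=\{((x_\alpha),(y_\alpha))\in X^\Gamma\times X^\Gamma:x_\alpha=y_\alpha\ \forall\alpha\in D\}$. The uniformity $\mathcal F$ consists of all $B\subseteq X^\Gamma\times X^\Gamma$ containing $\gamma_D$ for some finite $D\subseteq\Gamma$; equivalently, all $B$ containing $\{(x,y):d(x,y)<\varepsilon\}$ for some $\varepsilon>0$. For $\alpha\in\mathcal F$, $n\ge1$: $\zeta(x,y,\alpha,n)=\#\{i\in\{0,\dots,n-1\}:(f^i(x),f^i(y))\in\alpha\}$, $G_{xy}(\alpha)=\liminf_n\zeta(x,y,\alpha,n)/n$, $G^*_{xy}(\alpha)=\limsup_n\zeta(x,y,\alpha,n)/n$. Also $\xi(x,y,t,n)=\#\{i\in\{0,\dots,n-1\}:d(f^i(x),f^i(y))<t\}$, $F_{xy}(t)=\liminf_n\xi(x,y,t,n)/n$, $F^*_{xy}(t)=\limsup_n\xi(x,y,t,n)/n$. *)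

theory Defs
  imports "HOL-Analysis.Analysis" "HOL-Library.Liminf_Limsup"
begin

definition gammaD :: "'g set \<Rightarrow> 'a set \<Rightarrow> 'g set \<Rightarrow> (('g \<Rightarrow> 'a) \<times> ('g \<Rightarrow> 'a)) set" where
  "gammaD \<Gamma> X D = {(x, y). x \<in> PiE \<Gamma> (\<lambda>_. X) \<and> y \<in> PiE \<Gamma> (\<lambda>_. X) \<and> (\<forall>a\<in>D. x a = y a)}"

definition unif :: "'g set \<Rightarrow> 'a set \<Rightarrow> (('g \<Rightarrow> 'a) \<times> ('g \<Rightarrow> 'a)) set set" where
  "unif \<Gamma> X = {B. B \<subseteq> PiE \<Gamma> (\<lambda>_. X) \<times> PiE \<Gamma> (\<lambda>_. X) \<and>
                   (\<exists>D. finite D \<and> D \<subseteq> \<Gamma> \<and> gammaD \<Gamma> X D \<subseteq> B)}"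

definition zeta :: "('b \<Rightarrow> 'b) \<Rightarrow> 'b \<Rightarrow> 'b \<Rightarrow> ('b \<times> 'b) set \<Rightarrow> nat \<Rightarrow> nat" where
  "zeta f x y \<alpha> n = card {i. i < n \<and> ((f ^^ i) x, (f ^^ i) y) \<in> \<alpha>}"

definition Gl :: "('b \<Rightarrow> 'b) \<Rightarrow> 'b \<Rightarrow> 'b \<Rightarrow> ('b \<times> 'b) set \<Rightarrow> ereal" where
  "Gl f x y \<alpha> = liminf (\<lambda>n. ereal (real (zeta f x y \<alpha> n) / real n))"

definition Gu :: "('b \<Rightarrow> 'b) \<Rightarrow> 'b \<Rightarrow> 'b \<Rightarrow> ('b \<times> 'b) set \<Rightarrow> ereal" where
  "Gu f x y \<alpha> = limsup (\<lambda>n. ereal (real (zeta f x y \<alpha> n) / real n))"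

definition xi :: "('b \<Rightarrow> 'b) \<Rightarrow> ('b \<Rightarrow> 'b \<Rightarrow> real) \<Rightarrow> 'b \<Rightarrow> 'b \<Rightarrow> real \<Rightarrow> nat \<Rightarrow> nat" where
  "xi f d x y t n = card {i. i < n \<and> d ((f ^^ i) x) ((f ^^ i) y) < t}"

definition Fl :: "('b \<Rightarrow> 'b) \<Rightarrow> ('b \<Rightarrow> 'b \<Rightarrow> real) \<Rightarrow> 'b \<Rightarrow> 'b \<Rightarrow> real \<Rightarrow> ereal" where
  "Fl f d x y t = liminf (\<lambda>n. ereal (real (xi f d x y t n) / real n))"

definition Fu :: "('b \<Rightarrow> 'b) \<Rightarrow> ('b \<Rightarrow> 'b \<Rightarrow> real) \<Rightarrow> 'b \<Rightarrow> 'b \<Rightarrow> real \<Rightarrow> ereal" where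
  "Fu f d x y t = limsup (\<lambda>n. ereal (real (xi f d x y t n) / real n))"

end

theory Submission
  imports Defs
begin

definition cyl :: "'g set \<Rightarrow> 'a set \<Rightarrow> ('g \<Rightarrow> 'a) \<Rightarrow> 'g set \<Rightarrow> ('g \<Rightarrow> 'a) set" where
  "cyl \<Gamma> X u D = {v \<in> PiE \<Gamma> (\<lambda>_. X). \<forall>a\<in>D. v a = u a}"

lemma cyl_open:
  assumes "u \<in> PiE \<Gamma> (\<lambda>_. X)" "finite D" "D \<subseteq> \<Gamma>"
  shows "openin (product_topology (\<lambda>_. discrete_topology X) \<Gamma>) (cyl \<Gamma> X u D)"
proof -
  have eq: "cyl \<Gamma> X u D = PiE \<Gamma> (\<lambda>a. if a \<in> D then {u a} else X)"
  proof (intro equalityI subsetI)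
    fix v assume v: "v \<in> cyl \<Gamma> X u D"
    then have vP: "v \<in> PiE \<Gamma> (\<lambda>_. X)" and ag: "\<forall>a\<in>D. v a = u a" unfolding cyl_def by auto
    show "v \<in> PiE \<Gamma> (\<lambda>a. if a \<in> D then {u a} else X)"
    proof (rule PiE_I)
      fix i assume "i \<in> \<Gamma>"
      then have "v i \<in> X" using vP by (rule PiE_mem[rotated])
      then show "v i \<in> (if i \<in> D then {u i} else X)" using ag by simp
    next
      fix i assume "i \<notin> \<Gamma>"
      then show "v i = undefined" using vP by (rule PiE_arb[rotated])
    qed
  next
    fix v assume v: "v \<in> PiE \<Gamma> (\<lambda>a. if a \<in> D then {u a} else X)"
    have "PiE \<Gamma> (\<lambda>a. if a \<in> D then {u a} else X) \<subseteq> PiE \<Gamma> (\<lambda>_. X)"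
    proof (rule PiE_mono)
      fix i assume i: "i \<in> \<Gamma>"
      have "u i \<in> X" using assms(1) i by (rule PiE_mem)
      then show "(if i \<in> D then {u i} else X) \<subseteq> X" by simp
    qed
    then have vP: "v \<in> PiE \<Gamma> (\<lambda>_. X)" using v by blast
    have "\<forall>a\<in>D. v a = u a"
    proof
      fix a assume a: "a \<in> D"
      then have "a \<in> \<Gamma>" using assms(3) by blast
      then have "v a \<in> (if a \<in> D then {u a} else X)" using v by (rule PiE_mem[rotated])
      then show "v a = u a" using a by simp
    qed
    then show "v \<in> cyl \<Gamma> X u D" using vP unfolding cyl_def by blast
  qed
  have "finite {i \<in> \<Gamma>. (if i \<in> D then {u i} else X) \<noteq> topspace (discrete_topology X)}"
    by (rule finite_subset[OF _ assms(2)]) auto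
  moreover have "\<forall>i\<in>\<Gamma>. openin (discrete_topology X) (if i \<in> D then {u i} else X)"
    using assms(1) by (auto simp: PiE_iff)
  ultimately show ?thesis unfolding eq by (simp add: openin_PiE_gen)
qed

lemma comp_sp:
  assumes "finite X"
  shows "compact_space (product_topology (\<lambda>_. discrete_topology X) \<Gamma>)"
  using assms by (simp add: compact_space_product_topology compact_space_discrete_topology)

lemma unif1:
  assumes M: "Metric_space (PiE \<Gamma> (\<lambda>_. X)) d"
    and T: "Metric_space.mtopology (PiE \<Gamma> (\<lambda>_. X)) d = product_topology (\<lambda>_. discrete_topology X) \<Gamma>"
    and fin: "finite X" and s: "s > 0"
  shows "\<exists>D. finite D \<and> D \<subseteq> \<Gamma> \<and> (\<forall>v w. (v,w) \<in> gammaD \<Gamma> X D \<longrightarrow> d v w < s)"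
proof -
  interpret Metric_space "PiE \<Gamma> (\<lambda>_. X)" d by (rule M)
  let ?P = "PiE \<Gamma> (\<lambda>_. X)"
  let ?T = "product_topology (\<lambda>_. discrete_topology X) \<Gamma>"
  have "\<forall>u\<in>?P. \<exists>Du. finite Du \<and> Du \<subseteq> \<Gamma> \<and> cyl \<Gamma> X u Du \<subseteq> mball u (s/2)"
  proof
    fix u assume u: "u \<in> ?P"
    have "openin mtopology (mball u (s/2))" by (rule openin_mball)
    then have op: "openin ?T (mball u (s/2))" by (simp only: T)
    have mem: "u \<in> mball u (s/2)" using u s by simp
    obtain U where U: "finite {i \<in> \<Gamma>. U i \<noteq> topspace (discrete_topology X)}"
      "u \<in> Pi\<^sub>E \<Gamma> U" "Pi\<^sub>E \<Gamma> U \<subseteq> mball u (s/2)"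
      using openin_product_topology_alt[THEN iffD1, OF op, rule_format, OF mem] by (elim exE conjE) blast
    let ?D = "{i \<in> \<Gamma>. U i \<noteq> X}"
    have "cyl \<Gamma> X u ?D \<subseteq> Pi\<^sub>E \<Gamma> U"
    proof
      fix v assume v: "v \<in> cyl \<Gamma> X u ?D"
      show "v \<in> Pi\<^sub>E \<Gamma> U"
      proof (rule PiE_I)
        fix i assume i: "i \<in> \<Gamma>"
        show "v i \<in> U i"
        proof (cases "U i = X")
          case True
          have "v \<in> ?P" using v unfolding cyl_def by blast
          then have "v i \<in> X" using i by (rule PiE_mem)
          then show ?thesis using True by simp
        next
          case False
          then have "i \<in> ?D" using i by blast
          then have "v i = u i" using v unfolding cyl_def by blast
          moreover have "u i \<in> U i" using U(2) i by (rule PiE_mem)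
          ultimately show ?thesis by simp
        qed
      next
        fix i assume i: "i \<notin> \<Gamma>"
        have "v \<in> ?P" using v unfolding cyl_def by blast
        then show "v i = undefined" using i by (rule PiE_arb)
      qed
    qed
    moreover have "finite ?D" using U(1) by simp
    moreover have "?D \<subseteq> \<Gamma>" by blast
    ultimately have "finite ?D \<and> ?D \<subseteq> \<Gamma> \<and> cyl \<Gamma> X u ?D \<subseteq> mball u (s/2)"
      using U(3) by blast
    then show "\<exists>Du. finite Du \<and> Du \<subseteq> \<Gamma> \<and> cyl \<Gamma> X u Du \<subseteq> mball u (s/2)"
      by (rule exI)
  qed
  then obtain Du where Du0: "\<forall>u\<in>?P. finite (Du u) \<and> Du u \<subseteq> \<Gamma> \<and> cyl \<Gamma> X u (Du u) \<subseteq> mball u (s/2)"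
    by (rule bchoice[THEN exE]) blast
  have Du: "\<And>u. u \<in> ?P \<Longrightarrow> finite (Du u) \<and> Du u \<subseteq> \<Gamma> \<and> cyl \<Gamma> X u (Du u) \<subseteq> mball u (s/2)"
    using Du0 by (rule bspec)
  have cs: "compact_space ?T" by (rule comp_sp[OF fin])
  have op: "\<forall>C\<in>(\<lambda>u. cyl \<Gamma> X u (Du u)) ` ?P. openin ?T C"
  proof
    fix C assume "C \<in> (\<lambda>u. cyl \<Gamma> X u (Du u)) ` ?P"
    then obtain u where u: "u \<in> ?P" "C = cyl \<Gamma> X u (Du u)" by (rule imageE)
    show "openin ?T C" unfolding u(2) using Du[OF u(1)] by (intro cyl_open[OF u(1)]) simp_all
  qed
  have cov: "topspace ?T \<subseteq> \<Union>((\<lambda>u. cyl \<Gamma> X u (Du u)) ` ?P)"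
  proof
    fix v assume "v \<in> topspace ?T"
    then have v: "v \<in> ?P" by simp
    have "v \<in> cyl \<Gamma> X v (Du v)" using v by (simp add: cyl_def)
    then show "v \<in> \<Union>((\<lambda>u. cyl \<Gamma> X u (Du u)) ` ?P)" using v by (rule UN_I[rotated])
  qed
  obtain F where F: "finite F" "F \<subseteq> (\<lambda>u. cyl \<Gamma> X u (Du u)) ` ?P" "topspace ?T \<subseteq> \<Union>F"
    using compact_space_alt[THEN iffD1, OF cs, rule_format, OF conjI[OF op cov]] by (elim exE conjE) blast
  then obtain Tu where Tu: "finite Tu" "Tu \<subseteq> ?P" "F = (\<lambda>u. cyl \<Gamma> X u (Du u)) ` Tu"
    by (meson finite_subset_image)
  let ?D = "\<Union>u\<in>Tu. Du u"
  have fD: "finite ?D"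
  proof (rule finite_UN_I[OF Tu(1)])
    fix u assume "u \<in> Tu"
    then have "u \<in> ?P" using Tu(2) by blast
    then show "finite (Du u)" using Du by blast
  qed
  have sD: "?D \<subseteq> \<Gamma>"
  proof
    fix a assume "a \<in> ?D"
    then obtain u where u: "u \<in> Tu" "a \<in> Du u" by blast
    have "u \<in> ?P" using u(1) Tu(2) by blast
    then show "a \<in> \<Gamma>" using Du u(2) by blast
  qed
  have key: "\<forall>v w. (v,w) \<in> gammaD \<Gamma> X ?D \<longrightarrow> d v w < s"
  proof (intro allI impI)
    fix v w assume vw: "(v,w) \<in> gammaD \<Gamma> X ?D"
    then have v: "v \<in> ?P" and w: "w \<in> ?P" and ag: "\<forall>a\<in>?D. v a = w a" by (auto simp: gammaD_def)
    have "v \<in> topspace ?T" using v by simp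
    then have "v \<in> \<Union>F" using F(3) by blast
    then obtain C where C: "C \<in> F" "v \<in> C" by blast
    then obtain u where u0: "u \<in> Tu" "C = cyl \<Gamma> X u (Du u)" using Tu(3) by blast
    have u: "u \<in> Tu" "v \<in> cyl \<Gamma> X u (Du u)" using u0 C(2) by simp_all
    have "\<forall>a\<in>Du u. w a = u a"
    proof
      fix a assume a: "a \<in> Du u"
      then have "a \<in> ?D" using u(1) by blast
      then have "v a = w a" using ag by blast
      moreover have "v a = u a" using u(2) a unfolding cyl_def by blast
      ultimately show "w a = u a" by simp
    qed
    then have "w \<in> cyl \<Gamma> X u (Du u)" using w unfolding cyl_def by blast
    moreover have uP: "u \<in> ?P" using u(1) Tu(2) by blast
    ultimately have "w \<in> mball u (s/2)" "v \<in> mball u (s/2)" using Du[OF uP] u(2) by blast+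
    then have "d u w < s/2" "d u v < s/2" by simp_all
    moreover have "d v w \<le> d v u + d u w" using triangle uP v w by blast
    ultimately show "d v w < s" using commute[of v u] by linarith
  qed
  show ?thesis by (rule exI[of _ ?D], intro conjI fD sD key)
qed

lemma unif2:
  assumes M: "Metric_space (PiE \<Gamma> (\<lambda>_. X)) d"
    and T: "Metric_space.mtopology (PiE \<Gamma> (\<lambda>_. X)) d = product_topology (\<lambda>_. discrete_topology X) \<Gamma>"
    and fin: "finite X" and D: "finite D" "D \<subseteq> \<Gamma>" and ne: "PiE \<Gamma> (\<lambda>_. X) \<noteq> {}"
  shows "\<exists>s>0. \<forall>v\<in>PiE \<Gamma> (\<lambda>_. X). \<forall>w\<in>PiE \<Gamma> (\<lambda>_. X). d v w < s \<longrightarrow> (v,w) \<in> gammaD \<Gamma> X D"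
proof -
  interpret Metric_space "PiE \<Gamma> (\<lambda>_. X)" d by (rule M)
  let ?P = "PiE \<Gamma> (\<lambda>_. X)"
  let ?T = "product_topology (\<lambda>_. discrete_topology X) \<Gamma>"
  have "\<forall>u\<in>?P. \<exists>r>0. mball u r \<subseteq> cyl \<Gamma> X u D"
  proof
    fix u assume u: "u \<in> ?P"
    have "openin mtopology (cyl \<Gamma> X u D)" unfolding T by (rule cyl_open[OF u D])
    moreover have "u \<in> cyl \<Gamma> X u D" using u by (simp add: cyl_def)
    ultimately show "\<exists>r>0. mball u r \<subseteq> cyl \<Gamma> X u D" unfolding openin_mtopology by (elim conjE) (erule allE[where x=u], erule mp)
  qed
  then obtain r where r0: "\<forall>u\<in>?P. r u > 0 \<and> mball u (r u) \<subseteq> cyl \<Gamma> X u D"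
    by (rule bchoice[THEN exE]) blast
  have r: "\<And>u. u \<in> ?P \<Longrightarrow> r u > 0 \<and> mball u (r u) \<subseteq> cyl \<Gamma> X u D"
    using r0 by (rule bspec)
  have cs: "compact_space mtopology" using comp_sp[OF fin] T by simp
  have op: "\<forall>C\<in>(\<lambda>u. mball u (r u / 2)) ` ?P. openin mtopology C" by auto
  have cov: "topspace mtopology \<subseteq> \<Union>((\<lambda>u. mball u (r u / 2)) ` ?P)"
  proof
    fix v assume "v \<in> topspace mtopology"
    then have v: "v \<in> ?P" by simp
    have "v \<in> mball v (r v / 2)" using v r[OF v] by simp
    then show "v \<in> \<Union>((\<lambda>u. mball u (r u / 2)) ` ?P)" using v by (rule UN_I[rotated])
  qed
  obtain F where F: "finite F" "F \<subseteq> (\<lambda>u. mball u (r u / 2)) ` ?P" "topspace mtopology \<subseteq> \<Union>F"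
    using compact_space_alt[THEN iffD1, OF cs, rule_format, OF conjI[OF op cov]] by (elim exE conjE) blast
  then obtain Tu where Tu: "finite Tu" "Tu \<subseteq> ?P" "F = (\<lambda>u. mball u (r u / 2)) ` Tu"
    by (meson finite_subset_image)
  have "Tu \<noteq> {}" using F Tu ne by auto
  define s where "s = Min ((\<lambda>u. r u / 2) ` Tu)"
  have spos: "s > 0" unfolding s_def using Tu \<open>Tu \<noteq> {}\<close> r by (subst Min_gr_iff) auto
  have "\<forall>v\<in>?P. \<forall>w\<in>?P. d v w < s \<longrightarrow> (v,w) \<in> gammaD \<Gamma> X D"
  proof (intro ballI impI)
    fix v w assume v: "v \<in> ?P" and w: "w \<in> ?P" and dvw: "d v w < s"
    obtain u where u: "u \<in> Tu" "v \<in> mball u (r u / 2)" using F Tu v by auto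
    have "s \<le> r u / 2" unfolding s_def using Tu(1) u(1) by (intro Min_le) auto
    have uP: "u \<in> ?P" using u Tu by auto
    have "d u w \<le> d u v + d v w" using triangle uP v w by blast
    then have "d u w < r u" using u \<open>s \<le> r u / 2\<close> dvw by auto
    then have "w \<in> cyl \<Gamma> X u D" "v \<in> cyl \<Gamma> X u D" using r[OF uP] uP w u by auto
    then show "(v,w) \<in> gammaD \<Gamma> X D" by (auto simp: cyl_def gammaD_def)
  qed
  then show ?thesis using spos by blast
qed

lemma iter_in:
  assumes "f \<in> P \<rightarrow> P" "x \<in> P" shows "(f ^^ i) x \<in> P"
  using assms by (induction i) auto

lemma card_le_mono:
  assumes "\<And>i. i < n \<Longrightarrow> p i \<Longrightarrow> q i"
  shows "real (card {i. i < n \<and> p i}) / real n \<le> real (card {i. i < n \<and> q i}) / real n"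
proof -
  have "card {i. i < n \<and> p i} \<le> card {i. i < n \<and> q i}"
    by (rule card_mono) (auto simp: assms)
  then show ?thesis by (simp add: divide_right_mono)
qed

lemma ratio_bounds:
  shows "0 \<le> real (card {i. i < n \<and> p i}) / real n"
    and "real (card {i. i < n \<and> p i}) / real n \<le> 1"
proof -
  have "card {i. i < n \<and> p i} \<le> card {..<n}" by (rule card_mono) auto
  then have c: "card {i. i < n \<and> p i} \<le> n" by simp
  show "0 \<le> real (card {i. i < n \<and> p i}) / real n" by simp
  show "real (card {i. i < n \<and> p i}) / real n \<le> 1"
    using c by (cases "n = 0") (auto simp: divide_le_eq_1)
qed

lemma lim_mono:
  assumes "\<And>n. a n \<le> b n"
  shows "liminf (\<lambda>n. ereal (a n)) \<le> liminf (\<lambda>n. ereal (b n))"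
    "limsup (\<lambda>n. ereal (a n)) \<le> limsup (\<lambda>n. ereal (b n))"
  using assms by (auto intro!: Liminf_mono Limsup_mono always_eventually)

lemma Gl_ge0: "Gl f x y \<alpha> \<ge> 0"
  unfolding Gl_def zeta_def using ratio_bounds(1)
  by (intro Liminf_bounded always_eventually) auto
lemma Fl_ge0: "Fl f d x y t \<ge> 0"
  unfolding Fl_def xi_def using ratio_bounds(1)
  by (intro Liminf_bounded always_eventually) auto
lemma Gu_le1: "Gu f x y \<alpha> \<le> 1"
  unfolding Gu_def zeta_def using ratio_bounds(2)
  by (intro Limsup_bounded always_eventually) auto
lemma Fu_le1: "Fu f d x y t \<le> 1"
  unfolding Fu_def xi_def using ratio_bounds(2)
  by (intro Limsup_bounded always_eventually) auto

lemma G_mono: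
  assumes "\<And>i. ((f ^^ i) x, (f ^^ i) y) \<in> \<alpha> \<Longrightarrow> ((f ^^ i) x, (f ^^ i) y) \<in> \<beta>"
  shows "Gl f x y \<alpha> \<le> Gl f x y \<beta>" "Gu f x y \<alpha> \<le> Gu f x y \<beta>"
  unfolding Gl_def Gu_def zeta_def using assms
  by (intro lim_mono card_le_mono; blast)+

lemma GF_mono:
  assumes "\<And>i. ((f ^^ i) x, (f ^^ i) y) \<in> \<alpha> \<Longrightarrow> d ((f ^^ i) x) ((f ^^ i) y) < t"
  shows "Gl f x y \<alpha> \<le> Fl f d x y t" "Gu f x y \<alpha> \<le> Fu f d x y t"
  unfolding Gl_def Gu_def Fl_def Fu_def zeta_def xi_def using assms
  by (intro lim_mono card_le_mono; blast)+

lemma FG_mono: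
  assumes "\<And>i. d ((f ^^ i) x) ((f ^^ i) y) < t \<Longrightarrow> ((f ^^ i) x, (f ^^ i) y) \<in> \<alpha>"
  shows "Fl f d x y t \<le> Gl f x y \<alpha>" "Fu f d x y t \<le> Gu f x y \<alpha>"
  unfolding Gl_def Gu_def Fl_def Fu_def zeta_def xi_def using assms
  by (intro lim_mono card_le_mono; blast)+

theorem lemma3p1:
  fixes X :: "'a set" and \<Gamma> :: "'g set"
    and d :: "('g \<Rightarrow> 'a) \<Rightarrow> ('g \<Rightarrow> 'a) \<Rightarrow> real"
    and f :: "('g \<Rightarrow> 'a) \<Rightarrow> ('g \<Rightarrow> 'a)"
    and x y :: "'g \<Rightarrow> 'a"
  assumes "finite X" and "card X \<ge> 2"
    and "\<Gamma> \<noteq> {}" and "countable \<Gamma>"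
    and "Metric_space (PiE \<Gamma> (\<lambda>_. X)) d"
    and "Metric_space.mtopology (PiE \<Gamma> (\<lambda>_. X)) d = product_topology (\<lambda>_. discrete_topology X) \<Gamma>"
    and "f \<in> PiE \<Gamma> (\<lambda>_. X) \<rightarrow> PiE \<Gamma> (\<lambda>_. X)"
    and "x \<in> PiE \<Gamma> (\<lambda>_. X)" and "y \<in> PiE \<Gamma> (\<lambda>_. X)"
  shows
    "(((\<exists>s>0. Fl f d x y s = 0) \<longleftrightarrow> (\<exists>\<alpha>\<in>unif \<Gamma> X. Gl f x y \<alpha> = 0))
     \<and> ((\<exists>\<alpha>\<in>unif \<Gamma> X. Gl f x y \<alpha> = 0) \<longleftrightarrow>
          (\<exists>D. finite D \<and> D \<subseteq> \<Gamma> \<and> Gl f x y (gammaD \<Gamma> X D) = 0)))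
     \<and> (((\<exists>s>0. Fl f d x y s < 1) \<longleftrightarrow> (\<exists>\<alpha>\<in>unif \<Gamma> X. Gl f x y \<alpha> < 1))
     \<and> ((\<exists>\<alpha>\<in>unif \<Gamma> X. Gl f x y \<alpha> < 1) \<longleftrightarrow>
          (\<exists>D. finite D \<and> D \<subseteq> \<Gamma> \<and> Gl f x y (gammaD \<Gamma> X D) < 1)))
     \<and> (((\<forall>s>0. Fu f d x y s = 1) \<longleftrightarrow> (\<forall>\<alpha>\<in>unif \<Gamma> X. Gu f x y \<alpha> = 1))
     \<and> ((\<forall>\<alpha>\<in>unif \<Gamma> X. Gu f x y \<alpha> = 1) \<longleftrightarrow>
          (\<forall>D. finite D \<and> D \<subseteq> \<Gamma> \<longrightarrow> Gu f x y (gammaD \<Gamma> X D) = 1)))"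
proof -
  let ?P = "PiE \<Gamma> (\<lambda>_. X)"
  have xi: "\<And>i. (f ^^ i) x \<in> ?P" by (rule iter_in[OF assms(7,8)])
  have yi: "\<And>i. (f ^^ i) y \<in> ?P" by (rule iter_in[OF assms(7,9)])
  have ne: "?P \<noteq> {}" using assms(8) by auto
  have A: "\<exists>D. finite D \<and> D \<subseteq> \<Gamma> \<and> Gl f x y (gammaD \<Gamma> X D) \<le> Fl f d x y s
            \<and> Gu f x y (gammaD \<Gamma> X D) \<le> Fu f d x y s" if sp: "s > 0" for s
  proof -
    obtain D where D: "finite D \<and> D \<subseteq> \<Gamma> \<and> (\<forall>v w. (v,w) \<in> gammaD \<Gamma> X D \<longrightarrow> d v w < s)"
      using unif1[OF assms(5,6,1) sp] by (rule exE)
    have imp: "d ((f ^^ i) x) ((f ^^ i) y) < s" if "((f ^^ i) x, (f ^^ i) y) \<in> gammaD \<Gamma> X D" for i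
      using D that by simp
    have "Gl f x y (gammaD \<Gamma> X D) \<le> Fl f d x y s" by (rule GF_mono(1)[of f x y "gammaD \<Gamma> X D" d s, OF imp])
    moreover have "Gu f x y (gammaD \<Gamma> X D) \<le> Fu f d x y s" by (rule GF_mono(2)[of f x y "gammaD \<Gamma> X D" d s, OF imp])
    ultimately show ?thesis using D by (intro exI[of _ D]) simp
  qed
  have B: "\<exists>s>0. Fl f d x y s \<le> Gl f x y (gammaD \<Gamma> X D)
            \<and> Fu f d x y s \<le> Gu f x y (gammaD \<Gamma> X D)" if Df: "finite D" "D \<subseteq> \<Gamma>" for D
  proof -
    obtain s where s: "s > 0 \<and> (\<forall>v\<in>?P. \<forall>w\<in>?P. d v w < s \<longrightarrow> (v,w) \<in> gammaD \<Gamma> X D)"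
      using unif2[OF assms(5,6,1) Df ne] by (rule exE)
    have imp: "((f ^^ i) x, (f ^^ i) y) \<in> gammaD \<Gamma> X D" if "d ((f ^^ i) x) ((f ^^ i) y) < s" for i
      using s that xi[of i] yi[of i] by simp
    have "Fl f d x y s \<le> Gl f x y (gammaD \<Gamma> X D)" by (rule FG_mono(1)[of d f x y s "gammaD \<Gamma> X D", OF imp])
    moreover have "Fu f d x y s \<le> Gu f x y (gammaD \<Gamma> X D)" by (rule FG_mono(2)[of d f x y s "gammaD \<Gamma> X D", OF imp])
    ultimately show ?thesis using s by (intro exI[of _ s]) simp
  qed
  have U1: "\<exists>D. finite D \<and> D \<subseteq> \<Gamma> \<and> Gl f x y (gammaD \<Gamma> X D) \<le> Gl f x y \<alpha>
          \<and> Gu f x y (gammaD \<Gamma> X D) \<le> Gu f x y \<alpha>" if au: "\<alpha> \<in> unif \<Gamma> X" for \<alpha>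
  proof -
    have "\<exists>D. finite D \<and> D \<subseteq> \<Gamma> \<and> gammaD \<Gamma> X D \<subseteq> \<alpha>" using au unfolding unif_def by simp
    then obtain D where D: "finite D \<and> D \<subseteq> \<Gamma> \<and> gammaD \<Gamma> X D \<subseteq> \<alpha>" by (rule exE)
    have imp: "((f ^^ i) x, (f ^^ i) y) \<in> \<alpha>" if "((f ^^ i) x, (f ^^ i) y) \<in> gammaD \<Gamma> X D" for i
      using D that by blast
    have "Gl f x y (gammaD \<Gamma> X D) \<le> Gl f x y \<alpha>" by (rule G_mono(1)[of f x y "gammaD \<Gamma> X D" \<alpha>, OF imp])
    moreover have "Gu f x y (gammaD \<Gamma> X D) \<le> Gu f x y \<alpha>" by (rule G_mono(2)[of f x y "gammaD \<Gamma> X D" \<alpha>, OF imp])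
    ultimately show ?thesis using D by (intro exI[of _ D]) simp
  qed
  have U2: "gammaD \<Gamma> X D \<in> unif \<Gamma> X" if "finite D" "D \<subseteq> \<Gamma>" for D
  proof -
    have "gammaD \<Gamma> X D \<subseteq> ?P \<times> ?P" unfolding gammaD_def by blast
    then show ?thesis unfolding unif_def using that by blast
  qed
  have Glz: "\<And>a. Gl f x y a \<ge> 0" by (rule Gl_ge0)
  have Flz: "\<And>t. Fl f d x y t \<ge> 0" by (rule Fl_ge0)
  have Gu1: "\<And>a. Gu f x y a \<le> 1" by (rule Gu_le1)
  have Fu1: "\<And>t. Fu f d x y t \<le> 1" by (rule Fu_le1)
  show ?thesis
  proof (intro conjI iffI)
    assume "\<exists>s>0. Fl f d x y s = 0"
    then obtain s where s: "s > 0" "Fl f d x y s = 0" by blast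
    obtain D where D: "finite D" "D \<subseteq> \<Gamma>" "Gl f x y (gammaD \<Gamma> X D) \<le> Fl f d x y s"
      using A[OF s(1)] by blast
    have G: "Gl f x y (gammaD \<Gamma> X D) = 0" using D(3) s(2) Glz[of "gammaD \<Gamma> X D"] by simp
    show "\<exists>\<alpha>\<in>unif \<Gamma> X. Gl f x y \<alpha> = 0" using G U2[OF D(1,2)] by (rule bexI)
  next
    assume "\<exists>\<alpha>\<in>unif \<Gamma> X. Gl f x y \<alpha> = 0"
    then obtain a where a: "a \<in> unif \<Gamma> X" "Gl f x y a = 0" by blast
    obtain D where D: "finite D" "D \<subseteq> \<Gamma>" "Gl f x y (gammaD \<Gamma> X D) \<le> Gl f x y a"
      using U1[OF a(1)] by (elim exE conjE) blast
    obtain s where s: "s > 0" "Fl f d x y s \<le> Gl f x y (gammaD \<Gamma> X D)" using B[OF D(1,2)] by blast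
    have G: "Fl f d x y s = 0" using s(2) D(3) a(2) Flz[of s] by simp
    show "\<exists>s>0. Fl f d x y s = 0" by (intro exI[of _ s] conjI s(1) G)
  next
    assume "\<exists>\<alpha>\<in>unif \<Gamma> X. Gl f x y \<alpha> = 0"
    then obtain a where a: "a \<in> unif \<Gamma> X" "Gl f x y a = 0" by blast
    obtain D where D: "finite D" "D \<subseteq> \<Gamma>" "Gl f x y (gammaD \<Gamma> X D) \<le> Gl f x y a"
      using U1[OF a(1)] by blast
    have G: "Gl f x y (gammaD \<Gamma> X D) = 0" using D(3) a(2) Glz[of "gammaD \<Gamma> X D"] by simp
    show "\<exists>D. finite D \<and> D \<subseteq> \<Gamma> \<and> Gl f x y (gammaD \<Gamma> X D) = 0" by (intro exI[of _ D] conjI D(1,2) G)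
  next
    assume "\<exists>D. finite D \<and> D \<subseteq> \<Gamma> \<and> Gl f x y (gammaD \<Gamma> X D) = 0"
    then obtain D where D: "finite D" "D \<subseteq> \<Gamma>" and G: "Gl f x y (gammaD \<Gamma> X D) = 0" by (elim exE conjE) blast
    show "\<exists>\<alpha>\<in>unif \<Gamma> X. Gl f x y \<alpha> = 0" using G U2[OF D(1,2)] by (rule bexI)
  next
    assume "\<exists>s>0. Fl f d x y s < 1"
    then obtain s where s: "s > 0" "Fl f d x y s < 1" by blast
    obtain D where D: "finite D" "D \<subseteq> \<Gamma>" "Gl f x y (gammaD \<Gamma> X D) \<le> Fl f d x y s"
      using A[OF s(1)] by blast
    have G: "Gl f x y (gammaD \<Gamma> X D) < 1" using D(3) s(2) by simp
    show "\<exists>\<alpha>\<in>unif \<Gamma> X. Gl f x y \<alpha> < 1" using G U2[OF D(1,2)] by (rule bexI)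
  next
    assume "\<exists>\<alpha>\<in>unif \<Gamma> X. Gl f x y \<alpha> < 1"
    then obtain a where a: "a \<in> unif \<Gamma> X" "Gl f x y a < 1" by blast
    obtain D where D: "finite D" "D \<subseteq> \<Gamma>" "Gl f x y (gammaD \<Gamma> X D) \<le> Gl f x y a"
      using U1[OF a(1)] by (elim exE conjE) blast
    obtain s where s: "s > 0" "Fl f d x y s \<le> Gl f x y (gammaD \<Gamma> X D)" using B[OF D(1,2)] by blast
    have G: "Fl f d x y s < 1" using s(2) D(3) a(2) by simp
    show "\<exists>s>0. Fl f d x y s < 1" by (intro exI[of _ s] conjI s(1) G)
  next
    assume "\<exists>\<alpha>\<in>unif \<Gamma> X. Gl f x y \<alpha> < 1"
    then obtain a where a: "a \<in> unif \<Gamma> X" "Gl f x y a < 1" by blast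
    obtain D where D: "finite D" "D \<subseteq> \<Gamma>" "Gl f x y (gammaD \<Gamma> X D) \<le> Gl f x y a"
      using U1[OF a(1)] by blast
    have G: "Gl f x y (gammaD \<Gamma> X D) < 1" using D(3) a(2) by simp
    show "\<exists>D. finite D \<and> D \<subseteq> \<Gamma> \<and> Gl f x y (gammaD \<Gamma> X D) < 1" by (intro exI[of _ D] conjI D(1,2) G)
  next
    assume "\<exists>D. finite D \<and> D \<subseteq> \<Gamma> \<and> Gl f x y (gammaD \<Gamma> X D) < 1"
    then obtain D where D: "finite D" "D \<subseteq> \<Gamma>" and G: "Gl f x y (gammaD \<Gamma> X D) < 1" by (elim exE conjE) blast
    show "\<exists>\<alpha>\<in>unif \<Gamma> X. Gl f x y \<alpha> < 1" using G U2[OF D(1,2)] by (rule bexI)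
  next
    assume H: "\<forall>s>0. Fu f d x y s = 1"
    show "\<forall>\<alpha>\<in>unif \<Gamma> X. Gu f x y \<alpha> = 1"
    proof
      fix a assume a: "a \<in> unif \<Gamma> X"
      obtain D where D: "finite D" "D \<subseteq> \<Gamma>" "Gu f x y (gammaD \<Gamma> X D) \<le> Gu f x y a"
        using U1[OF a] by blast
      obtain s where s: "s > 0" "Fu f d x y s \<le> Gu f x y (gammaD \<Gamma> X D)" using B[OF D(1,2)] by blast
      have "Fu f d x y s = 1" using H s(1) by simp
      then have "1 \<le> Gu f x y a" using s(2) D(3) by simp
      then show "Gu f x y a = 1" using Gu1[of a] by simp
    qed
  next
    assume H: "\<forall>\<alpha>\<in>unif \<Gamma> X. Gu f x y \<alpha> = 1"
    show "\<forall>s>0. Fu f d x y s = 1"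
    proof (intro allI impI)
      fix s :: real assume s: "s > 0"
      obtain D where D: "finite D" "D \<subseteq> \<Gamma>" "Gu f x y (gammaD \<Gamma> X D) \<le> Fu f d x y s"
        using A[OF s] by blast
      have "Gu f x y (gammaD \<Gamma> X D) = 1" using H U2[OF D(1,2)] by simp
      then have "1 \<le> Fu f d x y s" using D(3) by simp
      then show "Fu f d x y s = 1" using Fu1[of s] by simp
    qed
  next
    assume H: "\<forall>\<alpha>\<in>unif \<Gamma> X. Gu f x y \<alpha> = 1"
    then show "\<forall>D. finite D \<and> D \<subseteq> \<Gamma> \<longrightarrow> Gu f x y (gammaD \<Gamma> X D) = 1" using U2 by simp
  next
    assume H: "\<forall>D. finite D \<and> D \<subseteq> \<Gamma> \<longrightarrow> Gu f x y (gammaD \<Gamma> X D) = 1"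
    show "\<forall>\<alpha>\<in>unif \<Gamma> X. Gu f x y \<alpha> = 1"
    proof
      fix a assume a: "a \<in> unif \<Gamma> X"
      obtain D where D: "finite D" "D \<subseteq> \<Gamma>" "Gu f x y (gammaD \<Gamma> X D) \<le> Gu f x y a"
        using U1[OF a] by blast
      have "Gu f x y (gammaD \<Gamma> X D) = 1" using H D(1,2) by simp
      then have "1 \<le> Gu f x y a" using D(3) by simp
      then show "Gu f x y a = 1" using Gu1[of a] by simp
    qed
  qed
qed

end
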